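(* Let $\epsilon>0$, let $s\ge 2$ be an integer, and let $0<p<\frac{s-1}{s}$. Then there exists $t=t(\epsilon,s,p)$ with the following property. For every $n$ and every $s$-wise $t$-intersecting family $\mathcal F\subseteq 2^{[n]}$, we have $\mu_p(\mathcal F)<\epsilon$.
   Context: Here $[n]=\{0,1,\dots,n-1\}$ and $2^{[n]}$ is the set of all subsets of $[n]$. A family $\mathcal F\subseteq 2^{[n]}$ is $s$-wise $t$-intersecting if $|F_1\cap\cdots\cap F_s|\ge t$ for every $F_1,\dots,F_s\in\mathcal F$. For $F\subseteq[n]$ define $\mu_p(F)=p^{|F|}(1-p)^{n-|F|}$, and for a family define $\mu_p(\mathcal F)=\sum_{F\in\mathcal F}\mu_p(F)$. Equivalently, $\mu_p(\mathcal F)$ is the probability that a random subset of $[n]$, containing each element independently with probability $p$, lies in $\mathcal F$. *)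

theory Defs
  imports Complex_Main
begin

text \<open>Ground set [n] = {0,..,n-1}; families are sets of subsets of {..<n}.\<close>

definition s_wise_t_intersecting :: "nat \<Rightarrow> nat \<Rightarrow> nat set set \<Rightarrow> bool" where
  "s_wise_t_intersecting s t \<F> \<longleftrightarrow>
     (\<forall>F. (\<forall>i<s. F i \<in> \<F>) \<longrightarrow> t \<le> card (\<Inter>i<s. F i))"

definition mu_p_set :: "nat \<Rightarrow> real \<Rightarrow> nat set \<Rightarrow> real" where
  "mu_p_set n p A = p ^ card A * (1 - p) ^ (n - card A)"

definition mu_p :: "nat \<Rightarrow> real \<Rightarrow> nat set set \<Rightarrow> real" where
  "mu_p n p \<F> = (\<Sum>A\<in>\<F>. mu_p_set n p A)"

end

theory Submission
  imports Defs
begin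

definition shift1 :: "nat \<Rightarrow> nat \<Rightarrow> nat set set \<Rightarrow> nat set \<Rightarrow> nat set" where
  "shift1 i j F A = (if j \<in> A \<and> i \<notin> A \<and> insert i (A - {j}) \<notin> F then insert i (A - {j}) else A)"

definition shiftF :: "nat \<Rightarrow> nat \<Rightarrow> nat set set \<Rightarrow> nat set set" where
  "shiftF i j F = shift1 i j F ` F"

definition shifted :: "nat set set \<Rightarrow> bool" where
  "shifted F \<longleftrightarrow> (\<forall>A\<in>F. \<forall>i j. i < j \<longrightarrow> j \<in> A \<longrightarrow> i \<notin> A \<longrightarrow> insert i (A - {j}) \<in> F)"

lemma shift1_inj: assumes "i \<noteq> j" shows "inj_on (shift1 i j F) F"
proof
  fix A B assume A: "A \<in> F" and B: "B \<in> F" and e: "shift1 i j F A = shift1 i j F B"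
  show "A = B"
  proof (cases "j \<in> A \<and> i \<notin> A \<and> insert i (A - {j}) \<notin> F")
    case True
    note tA = True
    show ?thesis
    proof (cases "j \<in> B \<and> i \<notin> B \<and> insert i (B - {j}) \<notin> F")
      case True
      then have "insert i (A - {j}) = insert i (B - {j})" using tA e by (simp add: shift1_def)
      moreover have "A = insert j (insert i (A - {j}) - {i})" using tA assms by blast
      moreover have "B = insert j (insert i (B - {j}) - {i})" using True assms by blast
      ultimately show ?thesis by metis
    next
      case False
      then have "shift1 i j F B = B" unfolding shift1_def by presburger
      then have "insert i (A - {j}) = B" using tA e by (simp add: shift1_def)
      then show ?thesis using tA B by simp
    qed
  next
    case False
    note fA = False
    show ?thesis
    proof (cases "j \<in> B \<and> i \<notin> B \<and> insert i (B - {j}) \<notin> F")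
      case True
      have "shift1 i j F A = A" using fA unfolding shift1_def by presburger
      then have "insert i (B - {j}) = A" using True e by (simp add: shift1_def)
      then show ?thesis using True A by simp
    next
      case False
      have "shift1 i j F A = A" using fA unfolding shift1_def by presburger
      moreover have "shift1 i j F B = B" using False unfolding shift1_def by presburger
      ultimately show ?thesis using e by metis
    qed
  qed
qed

lemma fam_fin: "F \<subseteq> Pow {..<n::nat} \<Longrightarrow> A \<in> F \<Longrightarrow> finite A"
  using finite_subset[of A "{..<n}"] by auto

lemma shift1_card: assumes "finite A" shows "card (shift1 i j F A) = card A"
  proof -
  have "j \<in> A \<Longrightarrow> card A > 0" using assms card_gt_0_iff by blast
  then show ?thesis using assms by (auto simp: shift1_def card_insert_if)
qed

lemma shift1_sub: assumes "A \<subseteq> {..<n}" "i < n" shows "shift1 i j F A \<subseteq> {..<n}"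
  using assms by (auto simp: shift1_def)

lemma shiftF_sub: assumes "F \<subseteq> Pow {..<n}" "i < n" shows "shiftF i j F \<subseteq> Pow {..<n}"
  unfolding shiftF_def
proof
  fix B assume "B \<in> shift1 i j F ` F"
  then obtain A where "A \<in> F" "B = shift1 i j F A" by blast
  then show "B \<in> Pow {..<n}" using assms shift1_sub[of A n i j F] by blast
qed

lemma shiftF_mu: assumes "F \<subseteq> Pow {..<n}" "i \<noteq> j"
  shows "mu_p n p (shiftF i j F) = mu_p n p F"
proof -
  have fA: "\<And>A. A \<in> F \<Longrightarrow> finite A" using assms(1) fam_fin by blast
  have "mu_p n p (shiftF i j F) = (\<Sum>A\<in>F. mu_p_set n p (shift1 i j F A))"
    unfolding mu_p_def shiftF_def by (rule sum.reindex[OF shift1_inj[OF assms(2)], unfolded comp_def])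
  also have "\<dots> = mu_p n p F"
    unfolding mu_p_def mu_p_set_def
    apply (rule sum.cong[OF refl])
    by (simp add: shift1_card fA)
  finally show ?thesis .
qed

lemma shiftF_wt:
  assumes "F \<subseteq> Pow {..<n}" "i < j" "shiftF i j F \<noteq> F"
  shows "(\<Sum>A\<in>shiftF i j F. \<Sum>A) < (\<Sum>A\<in>F. \<Sum>A)"
proof -
  have fin: "finite F" using assms(1) finite_subset by (metis finite_Pow_iff finite_lessThan)
  have finA: "\<And>A. A \<in> F \<Longrightarrow> finite A" using assms(1) by (meson PowD finite_lessThan finite_subset in_mono)
  have "(\<Sum>A\<in>shiftF i j F. \<Sum>A) = (\<Sum>A\<in>F. \<Sum>(shift1 i j F A))"
    unfolding shiftF_def using assms(2)
    by (subst sum.reindex[OF shift1_inj]) auto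
  also have "\<dots> < (\<Sum>A\<in>F. \<Sum>A)"
  proof (rule sum_strict_mono_ex1[OF fin])
    have key: "\<Sum>(shift1 i j F A) < \<Sum>A" if "A \<in> F" "shift1 i j F A \<noteq> A" for A
    proof -
      from that have c: "j \<in> A" "i \<notin> A" and e: "shift1 i j F A = insert i (A - {j})"
        by (auto simp: shift1_def split: if_splits)
      have "\<Sum>(insert i (A - {j})) = i + \<Sum>(A - {j})" using c finA[OF that(1)] by simp
      moreover have "\<Sum>A = j + \<Sum>(A - {j})" using c finA[OF that(1)] by (simp add: sum.remove)
      ultimately show ?thesis using e assms(2) by simp
    qed
    show "\<forall>A\<in>F. \<Sum>(shift1 i j F A) \<le> \<Sum>A"
      using key by (metis order.refl less_imp_le)
    show "\<exists>A\<in>F. \<Sum>(shift1 i j F A) < \<Sum>A"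
    proof (rule ccontr)
      assume "\<not> ?thesis"
      then have "\<forall>A\<in>F. shift1 i j F A = A" using key by (meson not_less order.refl)
      then have "shiftF i j F = F" unfolding shiftF_def by simp
      then show False using assms(3) by simp
    qed
  qed
  finally show ?thesis .
qed

lemma shiftF_swti:
  assumes sw: "s_wise_t_intersecting s t F" and s1: "s \<ge> 1" and ij: "i \<noteq> j"
    and fin: "\<And>A. A \<in> F \<Longrightarrow> finite A"
  shows "s_wise_t_intersecting s t (shiftF i j F)"
  unfolding s_wise_t_intersecting_def
proof (intro allI impI)
  fix Bf assume Bf: "\<forall>k<s. Bf k \<in> shiftF i j F"
  have "\<forall>k. \<exists>A. k < s \<longrightarrow> A \<in> F \<and> Bf k = shift1 i j F A"
    using Bf unfolding shiftF_def by blast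
  then obtain Af where Af: "\<And>k. k < s \<Longrightarrow> Af k \<in> F \<and> Bf k = shift1 i j F (Af k)"
    by metis
  have AfF: "\<And>k. k < s \<Longrightarrow> Af k \<in> F" using Af by blast
  have AfB: "\<And>k. k < s \<Longrightarrow> Bf k = shift1 i j F (Af k)" using Af by blast
  define IA where "IA = (\<Inter>k<s. Af k)"
  define IB where "IB = (\<Inter>k<s. Bf k)"
  define R where "R = IA - {i, j}"
  have tA: "t \<le> card IA" using sw Af unfolding s_wise_t_intersecting_def IA_def by blast
  have s0: "0 < s" using s1 by simp
  have "finite (Bf 0)" using Af[OF s0] fin by (auto simp: shift1_def)
  moreover have "IB \<subseteq> Bf 0" unfolding IB_def using s0 by auto
  ultimately have finB: "finite IB" by (rule finite_subset[rotated])
  have "finite (Af 0)" using Af[OF s0] fin by auto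
  moreover have "IA \<subseteq> Af 0" unfolding IA_def using s0 by auto
  ultimately have finIA: "finite IA" by (rule finite_subset[rotated])
  have RB: "R \<subseteq> IB"
  proof
    fix x assume x: "x \<in> R"
    show "x \<in> IB" unfolding IB_def
    proof
      fix k assume k: "k \<in> {..<s}"
      have "x \<in> Af k" using x k unfolding R_def IA_def by blast
      moreover have "Bf k = shift1 i j F (Af k)" using AfB k by simp
      ultimately show "x \<in> Bf k" using x unfolding R_def by (auto simp: shift1_def)
    qed
  qed
  show "t \<le> card IB"
  proof (cases "i \<in> IA")
    case True
    have "Bf k = Af k" if k: "k < s" for k
    proof -
      have "Bf k = shift1 i j F (Af k)" using AfB[OF k] by simp
      moreover have "i \<in> Af k" using True k unfolding IA_def by blast
      ultimately show ?thesis by (simp add: shift1_def)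
    qed
    then have "IB = IA" unfolding IA_def IB_def by simp
    then show ?thesis using tA by simp
  next
    case iA: False
    show ?thesis
    proof (cases "j \<in> IA")
      case False
      then have "IA = R" using iA unfolding R_def by blast
      then have "IA \<subseteq> IB" using RB by simp
      then show ?thesis using tA card_mono[OF finB, of IA] by linarith
    next
      case jA: True
      have IAR: "IA = insert j R" using jA iA unfolding R_def by blast
      show ?thesis
      proof (cases "j \<in> IB")
        case True
        then have "IA \<subseteq> IB" using IAR RB by blast
        then show ?thesis using tA card_mono[OF finB, of IA] by linarith
      next
        case jB: False
        then obtain m where m: "m < s" "j \<notin> Bf m" unfolding IB_def by blast
        have jAm: "j \<in> Af m" using jA m unfolding IA_def by blast
        have Bm: "Bf m = shift1 i j F (Af m)" using AfB m by simp
        have cm: "j \<in> Af m \<and> i \<notin> Af m \<and> insert i (Af m - {j}) \<notin> F"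
        proof (rule ccontr)
          assume "\<not> ?thesis"
          then have "Bf m = Af m" unfolding Bm shift1_def by presburger
          then show False using m jAm by simp
        qed
        then have shm: "Bf m = insert i (Af m - {j})" "i \<notin> Af m"
          unfolding Bm shift1_def by simp_all
        show ?thesis
        proof (cases "i \<in> IB")
          case True
          then have "insert i R \<subseteq> IB" using RB by blast
          moreover have "card (insert i R) = card IA"
          proof -
            have fR: "finite R" using finIA unfolding R_def by simp
            have "i \<notin> R" "j \<notin> R" unfolding R_def by auto
            then have "card (insert i R) = Suc (card R)" "card (insert j R) = Suc (card R)"
              using fR by simp_all
            then show ?thesis using IAR by simp
          qed
          ultimately show ?thesis using tA card_mono[OF finB, of "insert i R"] by linarith
        next
          case False
          then obtain l where l: "l < s" "i \<notin> Bf l" unfolding IB_def by blast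
          have lm: "l \<noteq> m" using l shm by auto
          have jAl: "j \<in> Af l" using jA l unfolding IA_def by blast
          have Bl: "Bf l = shift1 i j F (Af l)" using AfB l by simp
          have cl: "\<not> (j \<in> Af l \<and> i \<notin> Af l \<and> insert i (Af l - {j}) \<notin> F)"
          proof
            assume c: "j \<in> Af l \<and> i \<notin> Af l \<and> insert i (Af l - {j}) \<notin> F"
            then have "Bf l = insert i (Af l - {j})" unfolding Bl shift1_def by simp
            then show False using l by simp
          qed
          then have "Bf l = Af l" unfolding Bl shift1_def by presburger
          then have iAl: "i \<notin> Af l" using l by simp
          have Dl: "insert i (Af l - {j}) \<in> F" using cl iAl jAl by blast
          define Df where "Df = Af(l := insert i (Af l - {j}))"
          have "\<forall>k<s. Df k \<in> F" using AfF Dl unfolding Df_def by simp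
          then have tD: "t \<le> card (\<Inter>k<s. Df k)" using sw unfolding s_wise_t_intersecting_def by blast
          have "(\<Inter>k<s. Df k) \<subseteq> R"
          proof
            fix x assume x: "x \<in> (\<Inter>k<s. Df k)"
            have "x \<in> Df m" "x \<in> Df l" using x l m by auto
            then have "x \<noteq> i" "x \<noteq> j" using lm shm(2) unfolding Df_def by auto
            moreover have "\<And>k. k < s \<Longrightarrow> x \<in> Af k"
            proof -
              fix k assume "k < s"
              then have "x \<in> Df k" using x by auto
              then show "x \<in> Af k" using \<open>x \<noteq> i\<close> unfolding Df_def by (auto split: if_splits)
            qed
            ultimately show "x \<in> R" unfolding R_def IA_def by blast
          qed
          then have "(\<Inter>k<s. Df k) \<subseteq> IB" using RB by blast
          then show ?thesis using tD card_mono[OF finB, of "\<Inter>k<s. Df k"] by linarith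
        qed
      qed
    qed
  qed
qed

lemma exists_shifted:
  assumes "s \<ge> 1"
  shows "F \<subseteq> Pow {..<n} \<Longrightarrow> s_wise_t_intersecting s t F \<Longrightarrow>
    \<exists>G. G \<subseteq> Pow {..<n} \<and> s_wise_t_intersecting s t G \<and> mu_p n p G = mu_p n p F \<and> shifted G"
proof (induction "\<Sum>A\<in>F. \<Sum>A" arbitrary: F rule: less_induct)
  case less
  show ?case
  proof (cases "shifted F")
    case True
    then show ?thesis using less.prems by blast
  next
    case False
    then obtain A i j where A: "A \<in> F" "i < j" "j \<in> A" "i \<notin> A" "insert i (A - {j}) \<notin> F"
      unfolding shifted_def by blast
    have jn: "j < n" using A less.prems(1) by blast
    have "shift1 i j F A = insert i (A - {j})" using A by (simp add: shift1_def)
    then have "insert i (A - {j}) \<in> shiftF i j F" using A unfolding shiftF_def by (metis imageI)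
    then have ne: "shiftF i j F \<noteq> F" using A by blast
    have sub: "shiftF i j F \<subseteq> Pow {..<n}" using shiftF_sub[OF less.prems(1)] A jn by simp
    have sw: "s_wise_t_intersecting s t (shiftF i j F)"
      using shiftF_swti[OF less.prems(2) assms, of i j] A(2) fam_fin[OF less.prems(1)] by simp
    have mu: "mu_p n p (shiftF i j F) = mu_p n p F" using shiftF_mu[OF less.prems(1)] A by simp
    from less.hyps[OF shiftF_wt[OF less.prems(1) A(2) ne] sub sw] mu show ?thesis by metis
  qed
qed

lemma dominate:
  assumes sh: "shifted G"
  shows "A \<in> G \<Longrightarrow> finite A \<Longrightarrow> finite B \<Longrightarrow> card B = card A \<Longrightarrow>
    (\<forall>m. card (A \<inter> {..<m}) \<le> card (B \<inter> {..<m})) \<Longrightarrow> B \<in> G"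
proof (induction "card (A - B)" arbitrary: A rule: less_induct)
  case less
  show ?case
  proof (cases "A - B = {}")
    case True
    then have "A \<subseteq> B" by blast
    then have "A = B" using less.prems card_subset_eq by metis
    then show ?thesis using less.prems by simp
  next
    case False
    have "B - A \<noteq> {}"
    proof
      assume "B - A = {}"
      then have "B \<subseteq> A" by blast
      then have "A = B" using less.prems card_subset_eq by metis
      then show False using False by simp
    qed
    define i where "i = Min (B - A)"
    define j where "j = Min (A - B)"
    have fAB: "finite (A - B)" "finite (B - A)" using less.prems by auto
    have iBA: "i \<in> B - A" unfolding i_def using Min_in[OF fAB(2) \<open>B - A \<noteq> {}\<close>] .
    have jAB: "j \<in> A - B" unfolding j_def using Min_in[OF fAB(1) False] .
    have imin: "\<And>x. x \<in> B - A \<Longrightarrow> i \<le> x" unfolding i_def using fAB by simp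
    have jmin: "\<And>x. x \<in> A - B \<Longrightarrow> j \<le> x" unfolding j_def using fAB by simp
    have ij: "i < j"
    proof (rule ccontr)
      assume "\<not> i < j"
      then have ji: "j < i" using iBA jAB by (metis DiffD1 DiffD2 linorder_neqE_nat)
      have sub: "B \<inter> {..<Suc j} \<subseteq> A \<inter> {..<Suc j} - {j}"
      proof
        fix x assume x: "x \<in> B \<inter> {..<Suc j}"
        have "x \<in> A"
        proof (rule ccontr)
          assume "x \<notin> A"
          then have "i \<le> x" using imin x by blast
          then show False using x ji by simp
        qed
        moreover have "x \<noteq> j" using x jAB by auto
        ultimately show "x \<in> A \<inter> {..<Suc j} - {j}" using x by simp
      qed
      have "card (B \<inter> {..<Suc j}) \<le> card (A \<inter> {..<Suc j} - {j})"
        by (rule card_mono[OF _ sub]) (simp add: less.prems)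
      also have "\<dots> < card (A \<inter> {..<Suc j})"
        using jAB less.prems(2) by (intro card_Diff1_less) auto
      finally show False using less.prems(5) by (metis not_le)
    qed
    define A' where "A' = insert i (A - {j})"
    have A'G: "A' \<in> G" using sh less.prems(1) ij iBA jAB unfolding shifted_def A'_def by blast
    have fA': "finite A'" using less.prems(2) unfolding A'_def by simp
    have cA': "card A' = card A"
      using iBA jAB less.prems(2) ij unfolding A'_def
      by (simp add: card_insert_if card_gt_0_iff) (metis card_Diff1_less card_0_eq empty_iff
          less_nat_zero_code Suc_pred card_gt_0_iff)
    have "A' - B = (A - B) - {j}" unfolding A'_def using iBA by auto
    then have lt: "card (A' - B) < card (A - B)"
      using jAB fAB(1) card_Diff1_less[of "A - B" j] by simp
    have dom: "\<forall>m. card (A' \<inter> {..<m}) \<le> card (B \<inter> {..<m})"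
    proof
      fix m
      show "card (A' \<inter> {..<m}) \<le> card (B \<inter> {..<m})"
      proof (cases "i < m \<and> m \<le> j")
        case True
        have "A' \<inter> {..<m} \<subseteq> B \<inter> {..<m}"
        proof
          fix x assume x: "x \<in> A' \<inter> {..<m}"
          show "x \<in> B \<inter> {..<m}"
          proof (cases "x = i")
            case True then show ?thesis using iBA x by auto
          next
            case False
            then have "x \<in> A" "x < m" using x unfolding A'_def by auto
            moreover have "x \<in> B"
            proof (rule ccontr)
              assume "x \<notin> B"
              then have "j \<le> x" using jmin \<open>x \<in> A\<close> by blast
              then show False using \<open>x < m\<close> True by simp
            qed
            ultimately show ?thesis by simp
          qed
        qed
        then show ?thesis by (rule card_mono[rotated]) (simp add: less.prems)
      next
        case False
        have "card (A' \<inter> {..<m}) \<le> card (A \<inter> {..<m})"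
        proof (cases "m \<le> i")
          case True
          then have "A' \<inter> {..<m} = A \<inter> {..<m}" unfolding A'_def using ij by auto
          then show ?thesis by simp
        next
          case False
          then have jm: "j < m" using \<open>\<not> (i < m \<and> m \<le> j)\<close> by simp
          have "A' \<inter> {..<m} = insert i (A \<inter> {..<m} - {j})" unfolding A'_def using jm ij by auto
          moreover have "j \<in> A \<inter> {..<m}" using jAB jm by simp
          moreover have "card (A \<inter> {..<m}) > 0" using \<open>j \<in> A \<inter> {..<m}\<close> less.prems(2)
            card_gt_0_iff by blast
          moreover have "finite (A \<inter> {..<m})" using less.prems(2) by simp
          ultimately show ?thesis
            by (simp add: card_insert_if)
        qed
        then show ?thesis using less.prems(5) le_trans by blast
      qed
    qed
    show ?thesis
      using less.hyps[OF lt A'G fA' less.prems(3)] cA' less.prems(4) dom by simp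
  qed
qed

lemma pick_N: assumes "infinite (C::nat set)" shows "\<exists>N. card (C \<inter> {..<N}) = r"
proof (induction r)
  case 0
  then show ?case by (intro exI[of _ 0]) simp
next
  case (Suc r)
  then obtain N where N: "card (C \<inter> {..<N}) = r" by blast
  have "\<exists>x. x \<ge> N \<and> x \<in> C"
  proof (rule ccontr)
    assume "\<not> ?thesis"
    then have "C \<subseteq> {..<N}" by (auto simp: not_le)
    then show False using assms finite_subset by blast
  qed
  define x where "x = (LEAST x. x \<ge> N \<and> x \<in> C)"
  have x: "x \<ge> N" "x \<in> C" using LeastI_ex[OF \<open>\<exists>x. x \<ge> N \<and> x \<in> C\<close>] unfolding x_def by auto
  have xmin: "\<And>y. y \<ge> N \<Longrightarrow> y \<in> C \<Longrightarrow> x \<le> y" unfolding x_def by (simp add: Least_le)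
  have "C \<inter> {..<Suc x} = insert x (C \<inter> {..<N})"
  proof (rule set_eqI)
    fix y show "y \<in> C \<inter> {..<Suc x} \<longleftrightarrow> y \<in> insert x (C \<inter> {..<N})"
      using x xmin[of y] by (cases "y < N") auto
  qed
  moreover have "x \<notin> C \<inter> {..<N}" using x by simp
  ultimately have "card (C \<inter> {..<Suc x}) = Suc r" using N by simp
  then show ?case by blast
qed

lemma cnt:
  fixes s t k m a :: nat
  assumes s1: "s \<ge> 1" and k: "k < s" and t1: "t \<ge> 1"
    and h: "s * a < (s - 1) * m + t" and am: "a \<le> m"
  shows "a \<le> card ({x. x < t - 1 \<or> (x - (t - 1)) mod s \<noteq> k} \<inter> {..<m})"
proof (cases "m \<le> t - 1")
  case True
  then have "{x. x < t - 1 \<or> (x - (t - 1)) mod s \<noteq> k} \<inter> {..<m} = {..<m}" by auto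
  then show ?thesis using am by simp
next
  case False
  then have mt: "t \<le> m" by simp
  define E where "E = {x. t - 1 \<le> x \<and> x < m \<and> (x - (t - 1)) mod s = k}"
  have eq: "{x. x < t - 1 \<or> (x - (t - 1)) mod s \<noteq> k} \<inter> {..<m} = {..<m} - E"
    unfolding E_def by auto
  have Esub: "E \<subseteq> {..<m}" unfolding E_def by auto
  have finE: "finite E" using Esub finite_subset by blast
  define q where "q = (m - t) div s"
  have injE: "inj_on (\<lambda>x. (x - (t - 1)) div s) E"
  proof
    fix x y assume x: "x \<in> E" and y: "y \<in> E" and e: "(x - (t - 1)) div s = (y - (t - 1)) div s"
    have "x - (t - 1) = s * ((x - (t - 1)) div s) + (x - (t - 1)) mod s" by simp
    also have "\<dots> = s * ((y - (t - 1)) div s) + (y - (t - 1)) mod s" using e x y unfolding E_def by simp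
    also have "\<dots> = y - (t - 1)" by simp
    finally have "x - (t - 1) = y - (t - 1)" .
    moreover have "t - 1 \<le> x" "t - 1 \<le> y" using x y unfolding E_def by auto
    ultimately show "x = y" by linarith
  qed
  have "(\<lambda>x. (x - (t - 1)) div s) ` E \<subseteq> {..q}"
  proof
    fix z assume "z \<in> (\<lambda>x. (x - (t - 1)) div s) ` E"
    then obtain x where x: "x \<in> E" "z = (x - (t - 1)) div s" by blast
    have "x < m" using x unfolding E_def by simp
    then have "x - (t - 1) \<le> m - t" using t1 by linarith
    then have "z \<le> q" unfolding q_def x(2) by (rule div_le_mono)
    then show "z \<in> {..q}" by simp
  qed
  then have "card E \<le> card {..q}" by (intro card_inj_on_le[OF injE]) simp_all
  then have cE: "card E \<le> Suc q" by simp
  have sq: "s * q \<le> m - t" unfolding q_def by simp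
  have cardC: "card ({..<m} - E) = m - card E" using Esub finE by (simp add: card_Diff_subset)
  have cEm: "card E \<le> m" using card_mono[OF _ Esub] by simp
  have sm: "(s - 1) * m + m = s * m" using s1 by (cases s) auto
  have "s * card E \<le> s * Suc q" using cE by (rule mult_le_mono2)
  then have "s * (a + card E) \<le> s * a + s * q + s" by (simp add: algebra_simps)
  also have "\<dots> < (s - 1) * m + t + (m - t) + s" using h sq by linarith
  also have "\<dots> = s * (Suc m)" using sm mt by simp
  finally have "s * (a + card E) < s * Suc m" .
  then have "a + card E < Suc m" using mult_less_cancel1[of s "a + card E" "Suc m"] by blast
  then show ?thesis unfolding eq cardC by linarith
qed

lemma walk:
  assumes sh: "shifted G" and sw: "s_wise_t_intersecting s t G" and s2: "s \<ge> 2" and t1: "t \<ge> 1"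
    and A: "A \<in> G" and fA: "finite A"
  shows "\<exists>m. (s - 1) * m + t \<le> s * card (A \<inter> {..<m})"
proof (rule ccontr)
  assume "\<not> ?thesis"
  then have neg: "\<And>m. s * card (A \<inter> {..<m}) < (s - 1) * m + t" by (simp add: not_le)
  define C where "C k = {x. x < t - 1 \<or> (x - (t - 1)) mod s \<noteq> k}" for k
  have infC: "infinite (C k)" if k: "k < s" for k
  proof
    assume fin: "finite (C k)"
    then have "\<exists>M. \<forall>x\<in>C k. x \<le> M" by (simp only: finite_nat_set_iff_bounded_le)
    then obtain M where M: "\<And>x. x \<in> C k \<Longrightarrow> x \<le> M" by blast
    define x where "x = (t - 1) + s * Suc M + (k + 1) mod s"
    have "(x - (t - 1)) mod s = (k + 1) mod s" unfolding x_def by simp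
    moreover have "(k + 1) mod s \<noteq> k"
    proof (cases "k + 1 < s")
      case True then show ?thesis by simp
    next
      case False then have "k + 1 = s" using k by simp
      then show ?thesis using s2 by simp
    qed
    ultimately have "x \<in> C k" unfolding C_def by simp
    moreover have "s * Suc M \<ge> Suc M" using mult_le_mono1[of 1 s "Suc M"] s2 by simp
    then have "x > M" unfolding x_def by linarith
    ultimately show False using M by (meson not_le)
  qed
  have "\<forall>k. \<exists>N. k < s \<longrightarrow> card (C k \<inter> {..<N}) = card A" using infC pick_N by blast
  then obtain N where N: "\<And>k. k < s \<Longrightarrow> card (C k \<inter> {..<N k}) = card A" by metis
  define B where "B k = C k \<inter> {..<N k}" for k
  have BG: "B k \<in> G" if k: "k < s" for k
  proof (rule dominate[OF sh A fA])
    show "finite (B k)" unfolding B_def by simp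
    show "card (B k) = card A" unfolding B_def using N k by simp
    show "\<forall>m. card (A \<inter> {..<m}) \<le> card (B k \<inter> {..<m})"
    proof
      fix m
      show "card (A \<inter> {..<m}) \<le> card (B k \<inter> {..<m})"
      proof (cases "N k \<le> m")
        case True
        then have "B k \<inter> {..<m} = B k" unfolding B_def by auto
        moreover have "card (A \<inter> {..<m}) \<le> card A" using fA by (simp add: card_mono)
        ultimately show ?thesis using \<open>card (B k) = card A\<close> by simp
      next
        case False
        then have "B k \<inter> {..<m} = C k \<inter> {..<m}" unfolding B_def by auto
        moreover have "card (A \<inter> {..<m}) \<le> m"
          using card_mono[of "{..<m}" "A \<inter> {..<m}"] by simp
        ultimately show ?thesis unfolding C_def
          using cnt[of s k t "card (A \<inter> {..<m})" m] s2 k t1 neg by simp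
      qed
    qed
  qed
  have "t \<le> card (\<Inter>k<s. B k)" using sw BG unfolding s_wise_t_intersecting_def by blast
  moreover have "(\<Inter>k<s. B k) \<subseteq> {..<t - 1}"
  proof
    fix x assume x: "x \<in> (\<Inter>k<s. B k)"
    show "x \<in> {..<t - 1}"
    proof (rule ccontr)
      assume "x \<notin> {..<t - 1}"
      moreover have "(x - (t - 1)) mod s < s" using s2 by simp
      then have "x \<in> C ((x - (t - 1)) mod s)" using x unfolding B_def by blast
      ultimately show False unfolding C_def by simp
    qed
  qed
  then have "card (\<Inter>k<s. B k) \<le> card {..<t - 1}" by (intro card_mono) simp_all
  then have "card (\<Inter>k<s. B k) \<le> t - 1" by simp
  ultimately show False using t1 by linarith
qed

lemma prod_if_pow: "finite A \<Longrightarrow> (\<Prod>x\<in>A. if x < m then (c::real) else 1) = c ^ card (A \<inter> {..<m})"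
proof -
  assume "finite A"
  have "(\<Prod>x\<in>A. if x < m then c else 1) = (\<Prod>x\<in>A \<inter> {x. x < m}. c) * (\<Prod>x\<in>A \<inter> - {x. x < m}. 1)"
    using \<open>finite A\<close> by (rule prod.If_cases)
  also have "A \<inter> {x. x < m} = A \<inter> {..<m}" by auto
  finally show ?thesis by simp
qed

lemma gen_sum:
  fixes p z :: real
  assumes "m \<le> n"
  shows "(\<Sum>A\<in>Pow {..<n}. mu_p_set n p A * z ^ card (A \<inter> {..<m})) = (p * z + (1 - p)) ^ m"
proof -
  have "(\<Prod>x\<in>{..<n}. p * (if x < m then z else 1) + (1 - p))
      = (\<Sum>X\<in>Pow {..<n}. (\<Prod>x\<in>X. p * (if x < m then z else 1)) * (\<Prod>x\<in>{..<n} - X. 1 - p))"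
    by (rule prod_add) simp
  also have "\<dots> = (\<Sum>A\<in>Pow {..<n}. mu_p_set n p A * z ^ card (A \<inter> {..<m}))"
  proof (rule sum.cong[OF refl])
    fix X assume X: "X \<in> Pow {..<n}"
    then have fX: "finite X" using finite_subset by auto
    have "(\<Prod>x\<in>X. p * (if x < m then z else 1)) = p ^ card X * z ^ card (X \<inter> {..<m})"
      using fX by (simp add: prod.distrib prod_if_pow)
    moreover have "(\<Prod>x\<in>{..<n} - X. 1 - p) = (1 - p) ^ (n - card X)"
      using X fX by (simp add: card_Diff_subset)
    ultimately show "(\<Prod>x\<in>X. p * (if x < m then z else 1)) * (\<Prod>x\<in>{..<n} - X. 1 - p)
        = mu_p_set n p X * z ^ card (X \<inter> {..<m})"
      unfolding mu_p_set_def by (simp add: algebra_simps)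
  qed
  finally have e: "(\<Prod>x\<in>{..<n}. p * (if x < m then z else 1) + (1 - p))
      = (\<Sum>A\<in>Pow {..<n}. mu_p_set n p A * z ^ card (A \<inter> {..<m}))" .
  have "(\<Prod>x\<in>{..<n}. p * (if x < m then z else 1) + (1 - p))
      = (\<Prod>x\<in>{..<n}. if x < m then p * z + (1 - p) else 1)"
    by (rule prod.cong) auto
  also have "\<dots> = (p * z + (1 - p)) ^ m"
  proof -
    have "{..<n} \<inter> {..<m} = {..<m}" using assms by auto
    then show ?thesis by (simp add: prod_if_pow)
  qed
  finally show ?thesis using e by simp
qed

lemma exists_y:
  fixes p :: real and s :: nat
  assumes s2: "s \<ge> 2" and p: "p < (real s - 1) / real s"
  shows "\<exists>y>1. p * y ^ s + (1 - p) < y ^ (s - 1)"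
proof -
  define h where "h y = y ^ (s - 1) - p * y ^ s - (1 - p)" for y :: real
  have d: "(h has_real_derivative (real (s - 1) - p * real s)) (at 1)"
    unfolding h_def by (auto intro!: derivative_eq_intros)
  have "p * real s < real s - 1" using p s2 by (simp add: field_simps)
  then have pos: "0 < real (s - 1) - p * real s" using s2 by (simp add: of_nat_diff)
  obtain d where d0: "d > 0" and dh: "\<And>e. e > 0 \<Longrightarrow> e < d \<Longrightarrow> h 1 < h (1 + e)"
    using DERIV_pos_inc_right[OF d pos] by blast
  have "h 1 < h (1 + d / 2)" using dh[of "d/2"] d0 by simp
  moreover have "h 1 = 0" unfolding h_def by simp
  ultimately show ?thesis unfolding h_def using d0 by (intro exI[of _ "1 + d/2"]) auto
qed

lemma geo_bound: assumes "0 \<le> c" "c < (1::real)" shows "(\<Sum>m\<le>n. c ^ m) \<le> 1 / (1 - c)"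
proof -
  have "(\<Sum>m\<le>n. c ^ m) = (\<Sum>m<Suc n. c ^ m)" by (simp add: lessThan_Suc_atMost)
  also have "\<dots> = (1 - c ^ Suc n) / (1 - c)"
    using assms by (subst sum_gp_strict) (simp del: power_Suc sum.lessThan_Suc)
  also have "\<dots> \<le> 1 / (1 - c)" using assms by (intro divide_right_mono) auto
  finally show ?thesis .
qed

theorem lemma2p3:
  fixes \<epsilon> p :: real and s :: nat
  assumes "\<epsilon> > 0" and "s \<ge> 2" and "0 < p" and "p < (real s - 1) / real s"
  shows "\<exists>t::nat. \<forall>n::nat. \<forall>\<F>. \<F> \<subseteq> Pow {..<n} \<longrightarrow> s_wise_t_intersecting s t \<F>
            \<longrightarrow> mu_p n p \<F> < \<epsilon>"
proof -
  note eps = assms(1) and s2 = assms(2) and p0 = assms(3) and ps = assms(4)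
  obtain y :: real where y1: "y > 1" and hy: "p * y ^ s + (1 - p) < y ^ (s - 1)"
    using exists_y[OF s2 ps] by blast
  have p1: "p < 1"
  proof -
    have "(real s - 1) / real s < 1" using s2 by (simp add: field_simps)
    then show ?thesis using ps by linarith
  qed
  define c where "c = (p * y ^ s + (1 - p)) / y ^ (s - 1)"
  have ypos: "y ^ (s - 1) > 0" using y1 by simp
  have c1: "c < 1" unfolding c_def using hy ypos by (simp add: divide_less_eq)
  have c0: "0 \<le> c" unfolding c_def using p0 p1 y1 by (intro divide_nonneg_pos) (auto simp: ypos)
  obtain N where N: "1 / (\<epsilon> * (1 - c)) < y ^ N" using real_arch_pow[OF y1] by blast
  define t where "t = Suc N"
  have yt: "y ^ N \<le> y ^ t" unfolding t_def using y1 by (intro power_increasing) auto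
  have ytpos: "y ^ t > 0" using y1 by simp
  have bound: "1 / ((1 - c) * y ^ t) < \<epsilon>"
  proof -
    have "1 / (\<epsilon> * (1 - c)) < y ^ t" using N yt by linarith
    then have "1 < y ^ t * (\<epsilon> * (1 - c))" using eps c1 by (simp add: divide_less_eq)
    then show ?thesis using c1 ytpos eps by (simp add: divide_less_eq algebra_simps)
  qed
  show ?thesis
  proof (intro exI[of _ t] allI impI)
    fix n :: nat and F :: "nat set set"
    assume Fsub: "F \<subseteq> Pow {..<n}" and Fsw: "s_wise_t_intersecting s t F"
    obtain G where Gsub: "G \<subseteq> Pow {..<n}" and Gsw: "s_wise_t_intersecting s t G"
      and Gmu: "mu_p n p G = mu_p n p F" and Gsh: "shifted G"
      using exists_shifted[of s F n t p] s2 Fsub Fsw by auto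
    define W where "W A = (\<Sum>m\<le>n. y ^ (s * card (A \<inter> {..<m})) / (y ^ ((s - 1) * m) * y ^ t))"
      for A
    have mu0: "mu_p_set n p A \<ge> 0" for A unfolding mu_p_set_def using p0 p1 by simp
    have W1: "1 \<le> W A" if A: "A \<in> G" for A
    proof -
      have fA: "finite A" using fam_fin[OF Gsub A] .
      obtain m where m: "(s - 1) * m + t \<le> s * card (A \<inter> {..<m})"
        using walk[OF Gsh Gsw s2 _ A fA] unfolding t_def by auto
      have "\<exists>m'\<le>n. (s - 1) * m' + t \<le> s * card (A \<inter> {..<m'})"
      proof (cases "m \<le> n")
        case True then show ?thesis using m by blast
      next
        case False
        have "A \<subseteq> {..<n}" using Gsub A by blast
        then have e1: "A \<inter> {..<m} = A" "A \<inter> {..<n} = A" using False by auto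
        have "(s - 1) * n \<le> (s - 1) * m" using False by simp
        then have "(s - 1) * n + t \<le> s * card (A \<inter> {..<n})" using m unfolding e1 by linarith
        then show ?thesis by blast
      qed
      then obtain m' where m': "m' \<le> n" "(s - 1) * m' + t \<le> s * card (A \<inter> {..<m'})" by blast
      have "y ^ ((s - 1) * m' + t) \<le> y ^ (s * card (A \<inter> {..<m'}))"
        using m'(2) y1 by (intro power_increasing) auto
      then have "1 \<le> y ^ (s * card (A \<inter> {..<m'})) / (y ^ ((s - 1) * m') * y ^ t)"
        using y1 by (simp add: power_add)
      also have "\<dots> \<le> W A" unfolding W_def
        using y1 by (intro member_le_sum) (simp_all add: m'(1))
      finally show ?thesis .
    qed
    have W0: "W A \<ge> 0" for A unfolding W_def using y1 by (intro sum_nonneg) simp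
    have "mu_p n p F = (\<Sum>A\<in>G. mu_p_set n p A)" using Gmu unfolding mu_p_def by simp
    also have "\<dots> \<le> (\<Sum>A\<in>G. mu_p_set n p A * W A)"
    proof (rule sum_mono)
      fix A assume "A \<in> G"
      then have "mu_p_set n p A * 1 \<le> mu_p_set n p A * W A" by (intro mult_left_mono W1 mu0)
      then show "mu_p_set n p A \<le> mu_p_set n p A * W A" by simp
    qed
    also have "\<dots> \<le> (\<Sum>A\<in>Pow {..<n}. mu_p_set n p A * W A)"
      by (intro sum_mono2) (simp_all add: Gsub mu0 W0)
    also have "\<dots> = (\<Sum>m\<le>n. (\<Sum>A\<in>Pow {..<n}. mu_p_set n p A * (y ^ s) ^ card (A \<inter> {..<m}))
                        / (y ^ ((s - 1) * m) * y ^ t))"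
      unfolding W_def by (simp add: sum_distrib_left sum_divide_distrib power_mult sum.swap[of _ "Pow {..<n}"])
    also have "\<dots> = (\<Sum>m\<le>n. c ^ m / y ^ t)"
    proof (rule sum.cong[OF refl])
      fix m assume "m \<in> {..n}"
      then have "m \<le> n" by simp
      then have "(\<Sum>A\<in>Pow {..<n}. mu_p_set n p A * (y ^ s) ^ card (A \<inter> {..<m})) = (p * y ^ s + (1 - p)) ^ m"
        by (rule gen_sum)
      moreover have "c ^ m = (p * y ^ s + (1 - p)) ^ m / y ^ ((s - 1) * m)"
      proof -
        have "y ^ ((s - 1) * m) = (y ^ (s - 1)) ^ m" by (simp add: power_mult)
        then show ?thesis unfolding c_def by (simp add: power_divide)
      qed
      ultimately show "(\<Sum>A\<in>Pow {..<n}. mu_p_set n p A * (y ^ s) ^ card (A \<inter> {..<m})) / (y ^ ((s - 1) * m) * y ^ t)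
          = c ^ m / y ^ t" by simp
    qed
    also have "\<dots> = (\<Sum>m\<le>n. c ^ m) / y ^ t" by (simp add: sum_divide_distrib)
    also have "\<dots> \<le> (1 / (1 - c)) / y ^ t"
      using geo_bound[OF c0 c1] ytpos by (intro divide_right_mono) auto
    also have "\<dots> = 1 / ((1 - c) * y ^ t)" by simp
    also have "\<dots> < \<epsilon>" by (rule bound)
    finally show "mu_p n p F < \<epsilon>" .
  qed
qed

end
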